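(* Let $p>1$ be an integer. Then the point spectrum of $U_p$ on $\mathcal{R}$, i.e. the set of $\lambda\in\mathbb{R}$ for which there is a nonzero $f\in\mathcal{R}$ with $U_pf=\lambda f$, is \[\operatorname{spec}(U_p)=\{\pm p^{k}\,:\,k\in\mathbb{N}\}\cup\{0\},\] where $\mathbb{N}=\{0,1,2,\dots\}$.
   Context: $\mathcal{R}$ denotes the real vector space of rational functions $f(x)=A(x)/B(x)$ with $A,B\in\mathbb{R}[x]$, $B(0)\neq 0$ and $\deg A<\deg B$. For $f\in\mathcal{R}$ with Taylor expansion $f(x)=\sum_{n\ge0}a_nx^n$ at $0$ and a positive integer $p$, the Hecke operator $U_p$ is defined by $U_pf(x)=\sum_{n\ge 0}a_{pn}x^n$; this is again an element of $\mathcal{R}$. *)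

theory Defs
  imports "HOL-Computational_Algebra.Computational_Algebra"
begin

text \<open>Elements of the space R are identified with their Taylor expansions at 0,
  i.e. formal power series. f is in R iff f = A/B (as power series) with
  B(0) nonzero and deg A < deg B.\<close>

definition ratfun_space :: "real fps set" where
  "ratfun_space = {fps_of_poly A / fps_of_poly B | A B.
      poly B 0 \<noteq> 0 \<and> degree A < degree B}"

definition hecke_U :: "nat \<Rightarrow> real fps \<Rightarrow> real fps" where
  "hecke_U p f = Abs_fps (\<lambda>n. fps_nth f (p * n))"

definition point_spectrum_U :: "nat \<Rightarrow> real set" where
  "point_spectrum_U p = {c. \<exists>f \<in> ratfun_space. f \<noteq> 0 \<and> hecke_U p f = fps_const c * f}"

end

theory Submission
  imports Defs
begin


lemma fps_div_iff:
  fixes f :: "'a::field fps"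
  assumes "B $ 0 \<noteq> 0"
  shows "f = A / B \<longleftrightarrow> f * B = A"
proof
  assume "f = A / B"
  then show "f * B = A" using assms
    by (simp add: fps_divide_unit mult.assoc inverse_mult_eq_1)
next
  assume h: "f * B = A"
  have "A / B = f * (B * inverse B)" using assms h by (simp add: fps_divide_unit mult.assoc)
  also have "\<dots> = f" using assms by (simp add: inverse_mult_eq_1')
  finally show "f = A / B" by simp
qed

lemma ratfun_spaceI:
  fixes f :: "real fps"
  assumes "poly B 0 \<noteq> 0" "degree A < degree B" "f * fps_of_poly B = fps_of_poly A"
  shows "f \<in> ratfun_space"
proof -
  have "f = fps_of_poly A / fps_of_poly B"
    using assms by (subst fps_div_iff) (auto simp: poly_0_coeff_0)
  then show ?thesis using assms unfolding ratfun_space_def by blast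
qed

lemma ratfun_spaceE:
  fixes f :: "real fps"
  assumes "f \<in> ratfun_space"
  obtains A B where "poly B 0 \<noteq> 0" "degree A < degree B" "f * fps_of_poly B = fps_of_poly A"
proof -
  from assms obtain A B where "f = fps_of_poly A / fps_of_poly B" "poly B 0 \<noteq> 0" "degree A < degree B"
    unfolding ratfun_space_def by blast
  then show ?thesis using that fps_div_iff[of "fps_of_poly B" f "fps_of_poly A"]
    by (auto simp: poly_0_coeff_0)
qed

lemma periodic_rat:
  fixes N :: "real poly"
  assumes M: "M > 0" and dN: "degree N < M"
  shows "Abs_fps (\<lambda>n. coeff N (n mod M)) \<in> ratfun_space"
proof (rule ratfun_spaceI[of "1 - monom 1 M" N])
  show "poly (1 - monom 1 M) 0 \<noteq> 0" using M by (simp add: poly_0_coeff_0 coeff_monom)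
  have "degree (1 - monom 1 M :: real poly) = degree (1 + (- monom 1 M) :: real poly)" by simp
  also have "\<dots> = M" using M by (subst degree_add_eq_right) (simp_all add: degree_monom_eq)
  finally show "degree N < degree (1 - monom 1 M :: real poly)" using dN by simp
  show "Abs_fps (\<lambda>n. coeff N (n mod M)) * fps_of_poly (1 - monom 1 M) = fps_of_poly N"
  proof (rule fps_ext)
    fix n
    have "(Abs_fps (\<lambda>n. coeff N (n mod M)) * fps_of_poly (1 - monom 1 M)) $ n
       = coeff N (n mod M) - (if n < M then 0 else coeff N ((n - M) mod M))"
      by (simp add: fps_of_poly_diff fps_of_poly_monom' algebra_simps fps_X_power_mult_right_nth fps_X_power_mult_nth)
    also have "\<dots> = coeff N n"
    proof (cases "n < M")
      case True then show ?thesis by simp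
    next
      case False
      then have "(n - M) mod M = n mod M" by (simp add: mod_if)
      moreover have "coeff N n = 0" using False dN by (intro coeff_eq_0) simp
      ultimately show ?thesis using False by simp
    qed
    finally show "(Abs_fps (\<lambda>n. coeff N (n mod M)) * fps_of_poly (1 - monom 1 M)) $ n = fps_of_poly N $ n" by simp
  qed
qed

definition th :: "real fps \<Rightarrow> real fps" where
  "th f = fps_X * fps_deriv f"

lemma th_iter_nth: "((th ^^ k) f) $ n = real n ^ k * f $ n"
  by (induction k) (simp_all add: th_def fps_mult_fps_X_deriv_shift)

lemma th_rat:
  assumes "f \<in> ratfun_space"
  shows "th f \<in> ratfun_space"
proof -
  obtain A B where AB: "poly B 0 \<noteq> 0" "degree A < degree B" "f * fps_of_poly B = fps_of_poly A"
    using assms by (rule ratfun_spaceE)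
  define N where "N = [:0,1:] * (pderiv A * B - A * pderiv B)"
  have dB: "degree B \<ge> 1" using AB by simp
  have B0: "B \<noteq> 0" using AB by auto
  show ?thesis
  proof (rule ratfun_spaceI[of "B^2" N])
    show "poly (B^2) 0 \<noteq> 0" using AB by simp
    have d2: "degree (B^2) = 2 * degree B" using B0 by (simp add: degree_power_eq)
    have "degree (pderiv A * B) \<le> degree A + degree B - 1"
    proof (cases "degree A = 0")
      case True
      then have "pderiv A = 0" by (simp add: pderiv_eq_0_iff)
      then show ?thesis by simp
    next
      case False
      have "degree (pderiv A * B) \<le> degree (pderiv A) + degree B" by (rule degree_mult_le)
      then show ?thesis using False by (simp add: degree_pderiv)
    qed
    moreover have "degree (A * pderiv B) \<le> degree A + degree B - 1"
      using degree_mult_le[of A "pderiv B"] dB by (simp add: degree_pderiv)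
    ultimately have "degree (pderiv A * B - A * pderiv B) \<le> degree A + degree B - 1"
      by (rule degree_diff_le)
    then have "degree N \<le> degree A + degree B"
      unfolding N_def using degree_mult_le[of "[:0,1:]" "pderiv A * B - A * pderiv B"] dB
      by (cases "pderiv A * B - A * pderiv B = 0") auto
    then show "degree N < degree (B^2)" using d2 AB by simp
    have "fps_deriv (f * fps_of_poly B) = fps_deriv (fps_of_poly A)" using AB by simp
    then have e: "fps_deriv f * fps_of_poly B = fps_of_poly (pderiv A) - f * fps_of_poly (pderiv B)"
      by (simp add: fps_of_poly_pderiv algebra_simps)
    have "th f * fps_of_poly (B^2) = fps_X * ((fps_deriv f * fps_of_poly B) * fps_of_poly B)"
      by (simp add: th_def fps_of_poly_power power2_eq_square mult.assoc)
    also have "\<dots> = fps_X * (fps_of_poly (pderiv A) * fps_of_poly B - (f * fps_of_poly B) * fps_of_poly (pderiv B))"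
      unfolding e by (simp add: algebra_simps)
    also have "\<dots> = fps_of_poly N"
      unfolding N_def AB(3) by (simp add: fps_of_poly_mult fps_of_poly_diff algebra_simps)
    finally show "th f * fps_of_poly (B^2) = fps_of_poly N" .
  qed
qed

lemma hecke_nth: "hecke_U p f $ n = f $ (p * n)"
  by (simp add: hecke_U_def)

lemma eig_th:
  assumes "hecke_U p f = fps_const c * f"
  shows "hecke_U p ((th ^^ k) f) = fps_const (real p ^ k * c) * (th ^^ k) f"
proof (rule fps_ext)
  fix n
  have "f $ (p * n) = c * f $ n" using arg_cong[OF assms, of "\<lambda>g. g $ n"] by (simp add: hecke_nth)
  then show "hecke_U p ((th ^^ k) f) $ n = (fps_const (real p ^ k * c) * (th ^^ k) f) $ n"
    by (simp add: hecke_nth th_iter_nth power_mult_distrib)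
qed

lemma spec_supset:
  assumes p: "p > 1"
  shows "{c. \<exists>k::nat. c = real p ^ k \<or> c = - (real p ^ k)} \<union> {0} \<subseteq> point_spectrum_U p"
proof -
  have gen: "\<exists>f \<in> ratfun_space. f \<noteq> 0 \<and> hecke_U p f = fps_const c * f"
    if "f0 \<in> ratfun_space" "f0 $ 1 = 1" "hecke_U p f0 = fps_const c0 * f0" "c = real p ^ k * c0"
    for f0 c0 c k
  proof (intro bexI conjI)
    show "(th ^^ k) f0 \<in> ratfun_space"
      by (induction k) (simp_all add: that(1) th_rat)
    show "(th ^^ k) f0 \<noteq> 0"
    proof
      assume "(th ^^ k) f0 = 0"
      then have "((th ^^ k) f0) $ 1 = 0" by simp
      then show False using that(2) by (simp add: th_iter_nth)
    qed
    show "hecke_U p ((th ^^ k) f0) = fps_const c * (th ^^ k) f0"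
      using eig_th[OF that(3)] that(4) by simp
  qed
  have z: "0 \<in> point_spectrum_U p"
  proof -
    let ?f = "Abs_fps (\<lambda>n. coeff ([:0,1:] :: real poly) (n mod p))"
    have "?f \<in> ratfun_space" using p by (intro periodic_rat) auto
    moreover have "?f $ 1 = 1" using p by simp
    moreover have "hecke_U p ?f = fps_const 0 * ?f"
      by (rule fps_ext) (simp add: hecke_nth)
    ultimately show ?thesis unfolding point_spectrum_U_def
      using gen[of ?f 0 0 0] by auto
  qed
  have pos: "real p ^ k \<in> point_spectrum_U p" for k
  proof -
    let ?f = "Abs_fps (\<lambda>n. coeff (1 :: real poly) (n mod 1))"
    have "?f \<in> ratfun_space" by (intro periodic_rat) auto
    moreover have "?f $ 1 = 1" by simp
    moreover have "hecke_U p ?f = fps_const 1 * ?f"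
      by (rule fps_ext) (simp add: hecke_nth)
    ultimately show ?thesis unfolding point_spectrum_U_def
      using gen[of ?f 1 "real p ^ k" k] by auto
  qed
  have neg: "- (real p ^ k) \<in> point_spectrum_U p" for k
  proof -
    define N :: "real poly" where "N = [:0,1:] - monom 1 p"
    have cN: "coeff N m = (if m = 1 then 1 else 0) - (if m = p then 1 else 0)" for m
      by (simp add: N_def coeff_monom coeff_pCons split: nat.split)
    let ?f = "Abs_fps (\<lambda>n. coeff N (n mod (p+1)))"
    have dN: "degree N < p + 1"
      unfolding N_def by (rule le_less_trans[OF degree_diff_le_max]) (use p in \<open>simp add: degree_monom_eq\<close>)
    have "?f \<in> ratfun_space" using dN by (intro periodic_rat) auto
    moreover have "?f $ 1 = 1" using p by (simp add: cN)
    moreover have "hecke_U p ?f = fps_const (-1) * ?f"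
    proof (rule fps_ext)
      fix n
      define m where "m = n mod (p+1)"
      have m: "m < p + 1" unfolding m_def using p by simp
      have pm: "(p * n) mod (p+1) = (p * m) mod (p+1)" unfolding m_def by (simp add: mod_mult_right_eq)
      have "coeff N ((p * m) mod (p+1)) = - coeff N m"
      proof (cases "m = 0")
        case True then show ?thesis using p by (simp add: cN)
      next
        case False
        then obtain j where j: "m = Suc j" by (cases m) auto
        have jp: "j \<le> p" using j m by simp
        have "p * m = (p - j) + j * (p+1)" using jp unfolding j by (simp add: algebra_simps)
        then have "(p * m) mod (p+1) = (p - j) mod (p+1)" by (simp only: mod_mult_self1)
        also have "\<dots> = p + 1 - m" using j by simp
        finally have "(p * m) mod (p+1) = p + 1 - m" .
        then show ?thesis using False m p by (auto simp: cN)
      qed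
      then show "hecke_U p ?f $ n = (fps_const (-1) * ?f) $ n"
        using pm unfolding m_def by (simp add: hecke_nth)
    qed
    ultimately show ?thesis unfolding point_spectrum_U_def
      using gen[of ?f "-1" "- (real p ^ k)" k] by auto
  qed
  show ?thesis using z pos neg by auto
qed



lemma poly_deg_drop:
  fixes r :: "'a::zero poly"
  assumes "degree r \<le> m" "coeff r m = 0"
  shows "r = 0 \<or> degree r < m"
proof (rule ccontr)
  assume "\<not> (r = 0 \<or> degree r < m)"
  then have "r \<noteq> 0" "degree r = m" using assms by auto
  then show False using assms(2) by (metis leading_coeff_0_iff)
qed

lemma poly_zero_nat:
  fixes P :: "complex poly"
  assumes "\<And>n. poly P (of_nat n) = 0"
  shows "P = 0"
proof (rule ccontr)
  assume "P \<noteq> 0"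
  then have "finite {x. poly P x = 0}" by (rule poly_roots_finite)
  moreover have "range (of_nat :: nat \<Rightarrow> complex) \<subseteq> {x. poly P x = 0}" using assms by auto
  ultimately have "finite (range (of_nat :: nat \<Rightarrow> complex))" by (rule finite_subset[rotated])
  then have "finite (UNIV :: nat set)" using finite_imageD[of "of_nat :: nat \<Rightarrow> complex" UNIV]
    by (simp add: inj_of_nat)
  then show False by simp
qed

lemma coeff_pcompose_scale:
  fixes P :: "'a::comm_ring_1 poly"
  shows "coeff (pcompose P [:0, s:]) j = s ^ j * coeff P j"
proof (induction P arbitrary: j)
  case 0 then show ?case by simp
next
  case (pCons a P)
  show ?case
  proof (cases j)
    case 0 then show ?thesis by (simp add: pcompose_pCons)
  next
    case (Suc i) then show ?thesis using pCons(2) by (simp add: pcompose_pCons)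
  qed
qed

lemma coeff_shift_top:
  fixes P :: "complex poly"
  shows "coeff (pcompose P [:1, 1:]) (degree P) = lead_coeff P"
proof -
  have "degree (pcompose P [:1, 1:]) = degree P" by (simp add: degree_pcompose)
  moreover have "lead_coeff (pcompose P [:1, 1:]) = lead_coeff P"
    by (subst lead_coeff_comp) simp_all
  ultimately show ?thesis by simp
qed

definition qp :: "(nat \<Rightarrow> complex) \<Rightarrow> bool" where
  "qp a \<longleftrightarrow> (\<exists>A P. finite A \<and> 0 \<notin> A \<and> (\<forall>n. a n = (\<Sum>\<alpha>\<in>A. poly (P \<alpha>) (of_nat n) * \<alpha> ^ n)))"

lemma qp_zero: "qp (\<lambda>n. 0)"
  unfolding qp_def by (rule exI[of _ "{}"]) simp

lemma qp_single: "\<alpha> \<noteq> 0 \<Longrightarrow> qp (\<lambda>n. poly Q (of_nat n) * \<alpha> ^ n)"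
  unfolding qp_def by (rule exI[of _ "{\<alpha>}"], rule exI[of _ "\<lambda>_. Q"]) simp

lemma qp_add:
  assumes "qp a" "qp b"
  shows "qp (\<lambda>n. a n + b n)"
proof -
  obtain A P where A: "finite A" "0 \<notin> A" "\<And>n. a n = (\<Sum>\<alpha>\<in>A. poly (P \<alpha>) (of_nat n) * \<alpha> ^ n)"
    using assms(1) unfolding qp_def by blast
  obtain B Q where B: "finite B" "0 \<notin> B" "\<And>n. b n = (\<Sum>\<alpha>\<in>B. poly (Q \<alpha>) (of_nat n) * \<alpha> ^ n)"
    using assms(2) unfolding qp_def by blast
  define R where "R \<alpha> = (if \<alpha> \<in> A then P \<alpha> else 0) + (if \<alpha> \<in> B then Q \<alpha> else 0)" for \<alpha>
  have "a n + b n = (\<Sum>\<alpha>\<in>A \<union> B. poly (R \<alpha>) (of_nat n) * \<alpha> ^ n)" for n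
  proof -
    have "(\<Sum>\<alpha>\<in>A \<union> B. poly (R \<alpha>) (of_nat n) * \<alpha> ^ n)
      = (\<Sum>\<alpha>\<in>A \<union> B. (if \<alpha> \<in> A then poly (P \<alpha>) (of_nat n) * \<alpha> ^ n else 0))
      + (\<Sum>\<alpha>\<in>A \<union> B. (if \<alpha> \<in> B then poly (Q \<alpha>) (of_nat n) * \<alpha> ^ n else 0))"
      by (subst sum.distrib[symmetric], rule sum.cong, auto simp: R_def algebra_simps)
    also have "\<dots> = a n + b n"
      using A B by (simp add: sum.If_cases Int_absorb1 Int_absorb2)
    finally show ?thesis by simp
  qed
  then show ?thesis unfolding qp_def using A B by blast
qed

lemma qp_sum:
  assumes "finite S" "\<And>i. i \<in> S \<Longrightarrow> qp (g i)"
  shows "qp (\<lambda>n. \<Sum>i\<in>S. g i n)"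
  using assms
proof (induction S rule: finite_induct)
  case empty then show ?case by (simp add: qp_zero)
next
  case (insert x F)
  then show ?case using qp_add[of "g x" "\<lambda>n. \<Sum>i\<in>F. g i n"] by simp
qed

lemma div_comb: "r * (a / d) - b / d = (r * a - b) / (d::complex)"
  by (metis diff_divide_distrib times_divide_eq_right)

lemma binom_split: "((x::complex) + 1) ^ j = x ^ j + (\<Sum>i<j. of_nat (j choose i) * x ^ i)"
proof -
  have "(x + 1) ^ j = (\<Sum>i\<le>j. of_nat (j choose i) * x ^ i)"
    by (simp add: binomial_ring)
  also have "\<dots> = x ^ j + (\<Sum>i<j. of_nat (j choose i) * x ^ i)"
    by (simp add: lessThan_Suc_atMost[symmetric])
  finally show ?thesis .
qed

lemma diff_solve_monom:
  fixes r :: complex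
  shows "\<exists>Q. \<forall>x. r * poly Q (x+1) - poly Q x = x ^ j"
proof (induction j rule: less_induct)
  case (less j)
  then obtain Qf where Qf: "\<And>i x. i < j \<Longrightarrow> r * poly (Qf i) (x+1) - poly (Qf i) x = x ^ i"
    by metis
  show ?case
  proof (cases "r = 1")
    case False
    define Q where "Q = smult (1/(r-1)) (monom 1 j - smult r (\<Sum>i<j. smult (of_nat (j choose i)) (Qf i)))"
    have pQ: "poly Q x = (x ^ j - r * (\<Sum>i<j. of_nat (j choose i) * poly (Qf i) x)) / (r - 1)" for x
      by (simp add: Q_def poly_monom poly_sum)
    have "r * poly Q (x+1) - poly Q x = x ^ j" for x
    proof -
      define S1 where "S1 = (\<Sum>i<j. of_nat (j choose i) * poly (Qf i) (x+1))"
      define S0 where "S0 = (\<Sum>i<j. of_nat (j choose i) * poly (Qf i) x)"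
      have e1: "r * S1 - S0 = (\<Sum>i<j. of_nat (j choose i) * x ^ i)"
        unfolding S1_def S0_def sum_distrib_left sum_subtractf[symmetric]
      proof (rule sum.cong[OF refl])
        fix i assume "i \<in> {..<j}"
        then have "r * poly (Qf i) (x+1) - poly (Qf i) x = x ^ i" using Qf by simp
        then show "r * (of_nat (j choose i) * poly (Qf i) (x+1)) - of_nat (j choose i) * poly (Qf i) x = of_nat (j choose i) * x ^ i"
          by (metis mult.left_commute right_diff_distrib)
      qed
      have q1: "poly Q (x+1) = ((x+1)^j - r*S1)/(r-1)" by (simp add: pQ S1_def)
      have q0: "poly Q x = (x^j - r*S0)/(r-1)" by (simp add: pQ S0_def)
      have "r * poly Q (x+1) - poly Q x = (r*((x+1)^j - r*S1) - (x^j - r*S0))/(r-1)"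
        unfolding q1 q0 by (rule div_comb)
      also have "\<dots> = (r * (x+1)^j - x^j - r * (r * S1 - S0)) / (r - 1)"
        by (simp add: algebra_simps)
      also have "\<dots> = (r * (x+1)^j - x^j - r * (\<Sum>i<j. of_nat (j choose i) * x ^ i)) / (r - 1)"
        by (simp only: e1)
      also have "\<dots> = x ^ j"
      proof -
        have rn: "r - 1 \<noteq> 0" using False by simp
        show ?thesis unfolding binom_split using rn by (simp add: field_simps)
      qed
      finally show ?thesis .
    qed
    then show ?thesis by blast
  next
    case True
    define Q where "Q = smult (1/(of_nat j + 1)) (monom 1 (Suc j) - (\<Sum>i<j. smult (of_nat (Suc j choose i)) (Qf i)))"
    have pQ: "poly Q x = (x ^ Suc j - (\<Sum>i<j. of_nat (Suc j choose i) * poly (Qf i) x)) / (of_nat j + 1)" for x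
      by (simp add: Q_def poly_monom poly_sum)
    have nz: "(of_nat j + 1 :: complex) \<noteq> 0"
      using of_nat_neq_0[of j, where 'a=complex] by (simp add: add.commute)
    have bs: "(x + 1) ^ Suc j = x ^ Suc j + (of_nat j + 1) * x ^ j + (\<Sum>i<j. of_nat (Suc j choose i) * x ^ i)" for x :: complex
      by (subst binom_split) (simp add: algebra_simps)
    have "r * poly Q (x+1) - poly Q x = x ^ j" for x
    proof -
      define S1 where "S1 = (\<Sum>i<j. of_nat (Suc j choose i) * poly (Qf i) (x+1))"
      define S0 where "S0 = (\<Sum>i<j. of_nat (Suc j choose i) * poly (Qf i) x)"
      have e1: "r * S1 - S0 = (\<Sum>i<j. of_nat (Suc j choose i) * x ^ i)"
        unfolding S1_def S0_def sum_distrib_left sum_subtractf[symmetric]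
      proof (rule sum.cong[OF refl])
        fix i assume "i \<in> {..<j}"
        then have "r * poly (Qf i) (x+1) - poly (Qf i) x = x ^ i" using Qf by simp
        then show "r * (of_nat (Suc j choose i) * poly (Qf i) (x+1)) - of_nat (Suc j choose i) * poly (Qf i) x = of_nat (Suc j choose i) * x ^ i"
          by (metis mult.left_commute right_diff_distrib)
      qed
      have q1: "poly Q (x+1) = ((x+1)^Suc j - S1)/(of_nat j + 1)" by (simp add: pQ S1_def)
      have q0: "poly Q x = (x^Suc j - S0)/(of_nat j + 1)" by (simp add: pQ S0_def)
      have "r * poly Q (x+1) - poly Q x = (((x+1)^Suc j - S1) - (x^Suc j - S0))/(of_nat j + 1)"
        unfolding q1 q0 True using div_comb[of 1] by simp
      also have "\<dots> = ((x+1)^Suc j - x^Suc j - (r * S1 - S0)) / (of_nat j + 1)"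
        using True by (simp add: algebra_simps)
      also have "\<dots> = ((x+1)^Suc j - x^Suc j - (\<Sum>i<j. of_nat (Suc j choose i) * x ^ i)) / (of_nat j + 1)"
        by (simp only: e1)
      also have "\<dots> = x ^ j" unfolding bs using nz by (simp add: field_simps)
      finally show ?thesis .
    qed
    then show ?thesis by blast
  qed
qed

lemma diff_solve:
  fixes r :: complex
  shows "\<exists>Q. \<forall>x. r * poly Q (x+1) - poly Q x = poly P x"
proof -
  obtain Qf where Qf: "\<And>i x. r * poly (Qf i) (x+1) - poly (Qf i) x = x ^ i"
    using diff_solve_monom[of r] by metis
  define Q where "Q = (\<Sum>i\<le>degree P. smult (coeff P i) (Qf i))"
  have "r * poly Q (x+1) - poly Q x = poly P x" for x
  proof -
    have "r * poly Q (x+1) - poly Q x = (\<Sum>i\<le>degree P. coeff P i * (r * poly (Qf i) (x+1) - poly (Qf i) x))"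
      by (simp add: Q_def poly_sum sum_distrib_left sum_subtractf algebra_simps)
    also have "\<dots> = poly P x" by (simp only: Qf) (simp add: poly_altdef)
    finally show ?thesis .
  qed
  then show ?thesis by blast
qed




definition Tconv :: "complex \<Rightarrow> (nat \<Rightarrow> complex) \<Rightarrow> nat \<Rightarrow> complex" where
  "Tconv \<alpha> a n = (\<Sum>k\<le>n. \<alpha> ^ (n - k) * a k)"

lemma T_single:
  assumes a0: "\<alpha> \<noteq> 0" and b0: "\<beta> \<noteq> 0"
  shows "qp (Tconv \<alpha> (\<lambda>k. poly Q (of_nat k) * \<beta> ^ k))"
proof -
  define r where "r = \<beta> / \<alpha>"
  obtain R where R: "\<And>x. r * poly R (x+1) - poly R x = poly Q x"
    using diff_solve[of r Q] by blast
  define g where "g k = r ^ k * poly R (of_nat k)" for k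
  have e: "Tconv \<alpha> (\<lambda>k. poly Q (of_nat k) * \<beta> ^ k) n
      = poly (smult r (pcompose R [:1,1:])) (of_nat n) * \<beta> ^ n + poly [:- poly R 0:] (of_nat n) * \<alpha> ^ n" for n
  proof -
    have "Tconv \<alpha> (\<lambda>k. poly Q (of_nat k) * \<beta> ^ k) n = (\<Sum>k\<le>n. \<alpha> ^ n * (g (Suc k) - g k))"
      unfolding Tconv_def
    proof (rule sum.cong[OF refl])
      fix k assume "k \<in> {..n}"
      then have kn: "k \<le> n" by simp
      have "\<alpha> ^ (n - k) * \<beta> ^ k = \<alpha> ^ n * r ^ k"
        using a0 kn by (simp add: r_def power_diff power_divide field_simps)
      moreover have "g (Suc k) - g k = r ^ k * poly Q (of_nat k)"
      proof -
        have "g (Suc k) - g k = r ^ k * (r * poly R (of_nat k + 1) - poly R (of_nat k))"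
          by (simp add: g_def algebra_simps)
        then show ?thesis using R[of "of_nat k"] by simp
      qed
      ultimately show "\<alpha> ^ (n - k) * (poly Q (of_nat k) * \<beta> ^ k) = \<alpha> ^ n * (g (Suc k) - g k)"
        by (simp add: algebra_simps)
    qed
    also have "\<dots> = \<alpha> ^ n * (g (Suc n) - g 0)"
      by (simp add: sum_distrib_left[symmetric] lessThan_Suc_atMost[symmetric] sum_lessThan_telescope)
    also have "\<dots> = poly (smult r (pcompose R [:1,1:])) (of_nat n) * \<beta> ^ n + poly [:- poly R 0:] (of_nat n) * \<alpha> ^ n"
    proof -
      have "\<alpha> ^ n * r ^ Suc n = r * \<beta> ^ n" using a0 by (simp add: r_def power_divide field_simps)
      then show ?thesis unfolding g_def by (simp add: poly_pcompose algebra_simps) blast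
    qed
    finally show ?thesis .
  qed
  have "qp (\<lambda>n. poly (smult r (pcompose R [:1,1:])) (of_nat n) * \<beta> ^ n + poly [:- poly R 0:] (of_nat n) * \<alpha> ^ n)"
    by (intro qp_add qp_single a0 b0)
  moreover have "Tconv \<alpha> (\<lambda>k. poly Q (of_nat k) * \<beta> ^ k) = (\<lambda>n. poly (smult r (pcompose R [:1,1:])) (of_nat n) * \<beta> ^ n + poly [:- poly R 0:] (of_nat n) * \<alpha> ^ n)"
    by (rule ext) (rule e)
  ultimately show ?thesis by simp
qed

lemma T_qp:
  assumes a0: "\<alpha> \<noteq> 0" and q: "qp a"
  shows "qp (Tconv \<alpha> a)"
proof -
  obtain A P where A: "finite A" "0 \<notin> A" "\<And>n. a n = (\<Sum>\<beta>\<in>A. poly (P \<beta>) (of_nat n) * \<beta> ^ n)"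
    using q unfolding qp_def by blast
  have "Tconv \<alpha> a n = (\<Sum>\<beta>\<in>A. Tconv \<alpha> (\<lambda>k. poly (P \<beta>) (of_nat k) * \<beta> ^ k) n)" for n
    unfolding Tconv_def A(3) sum_distrib_left by (rule sum.swap)
  moreover have "qp (\<lambda>n. \<Sum>\<beta>\<in>A. Tconv \<alpha> (\<lambda>k. poly (P \<beta>) (of_nat k) * \<beta> ^ k) n)"
    using A by (intro qp_sum T_single a0) auto
  ultimately have "Tconv \<alpha> a = (\<lambda>n. \<Sum>\<beta>\<in>A. Tconv \<alpha> (\<lambda>k. poly (P \<beta>) (of_nat k) * \<beta> ^ k) n)"
    by (intro ext) simp
  with \<open>qp (\<lambda>n. \<Sum>\<beta>\<in>A. Tconv \<alpha> (\<lambda>k. poly (P \<beta>) (of_nat k) * \<beta> ^ k) n)\<close> show ?thesis by simp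
qed




lemma qp_unique:
  fixes A :: "complex set"
  assumes "finite A" "0 \<notin> A"
  shows "\<forall>P. (\<forall>n. (\<Sum>\<alpha>\<in>A. poly (P \<alpha>) (of_nat n) * \<alpha> ^ n) = 0) \<longrightarrow> (\<forall>\<alpha>\<in>A. P \<alpha> = 0)"
  using assms
proof (induction A rule: finite_induct)
  case empty then show ?case by simp
next
  case (insert a A')
  have a0: "a \<noteq> 0" and A0: "0 \<notin> A'" using insert.prems by auto
  have IH: "\<And>P. (\<forall>n. (\<Sum>\<alpha>\<in>A'. poly (P \<alpha>) (of_nat n) * \<alpha> ^ n) = 0) \<Longrightarrow> \<forall>\<alpha>\<in>A'. P \<alpha> = 0"
    using insert.IH A0 by blast
  define \<mu> where "\<mu> Q = (if Q = 0 then 0 else Suc (degree Q))" for Q :: "complex poly"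
  have main: "\<forall>P. \<mu> (P a) = m \<longrightarrow> (\<forall>n. (\<Sum>\<alpha>\<in>insert a A'. poly (P \<alpha>) (of_nat n) * \<alpha> ^ n) = 0)
      \<longrightarrow> (\<forall>\<alpha>\<in>insert a A'. P \<alpha> = 0)" for m
  proof (induction m rule: less_induct)
    case (less m)
    show ?case
    proof (intro allI impI)
      fix P assume m: "\<mu> (P a) = m" and S: "\<forall>n. (\<Sum>\<alpha>\<in>insert a A'. poly (P \<alpha>) (of_nat n) * \<alpha> ^ n) = 0"
      show "\<forall>\<alpha>\<in>insert a A'. P \<alpha> = 0"
      proof (cases "P a = 0")
        case True
        have "\<forall>n. (\<Sum>\<alpha>\<in>A'. poly (P \<alpha>) (of_nat n) * \<alpha> ^ n) = 0"
          using S True insert.hyps by simp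
        then show ?thesis using IH True by blast
      next
        case False
        define P' where "P' \<alpha> = smult \<alpha> (pcompose (P \<alpha>) [:1,1:]) - smult a (P \<alpha>)" for \<alpha>
        have S': "\<forall>n. (\<Sum>\<alpha>\<in>insert a A'. poly (P' \<alpha>) (of_nat n) * \<alpha> ^ n) = 0"
        proof
          fix n
          have "(\<Sum>\<alpha>\<in>insert a A'. poly (P' \<alpha>) (of_nat n) * \<alpha> ^ n)
            = (\<Sum>\<alpha>\<in>insert a A'. poly (P \<alpha>) (of_nat (Suc n)) * \<alpha> ^ Suc n) - a * (\<Sum>\<alpha>\<in>insert a A'. poly (P \<alpha>) (of_nat n) * \<alpha> ^ n)"
            by (simp add: P'_def poly_pcompose sum_distrib_left sum_subtractf[symmetric] algebra_simps)
          also have "\<dots> = 0" using S[rule_format, of "Suc n"] S[rule_format, of n] by (simp only:) simp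
          finally show "(\<Sum>\<alpha>\<in>insert a A'. poly (P' \<alpha>) (of_nat n) * \<alpha> ^ n) = 0" .
        qed
        have "\<mu> (P' a) < m"
        proof -
          let ?D = "pcompose (P a) [:1,1:] - P a"
          have "degree ?D \<le> degree (P a)"
            by (rule degree_diff_le) (simp_all add: degree_pcompose)
          moreover have "coeff ?D (degree (P a)) = 0" by (simp add: coeff_shift_top)
          ultimately have "?D = 0 \<or> degree ?D < degree (P a)" by (rule poly_deg_drop)
          moreover have "P' a = smult a ?D" by (simp add: P'_def smult_diff_right)
          ultimately show ?thesis using m False a0 unfolding \<mu>_def by auto
        qed
        then have P'0: "\<forall>\<alpha>\<in>insert a A'. P' \<alpha> = 0" using less.IH S' by blast
        have PA: "\<forall>\<alpha>\<in>A'. P \<alpha> = 0"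
        proof
          fix \<alpha> assume \<alpha>: "\<alpha> \<in> A'"
          then have ne: "\<alpha> \<noteq> a" using insert.hyps by auto
          show "P \<alpha> = 0"
          proof (rule ccontr)
            assume nz: "P \<alpha> \<noteq> 0"
            have "smult \<alpha> (pcompose (P \<alpha>) [:1,1:]) = smult a (P \<alpha>)"
              using P'0 \<alpha> by (simp add: P'_def)
            then have "coeff (smult \<alpha> (pcompose (P \<alpha>) [:1,1:])) (degree (P \<alpha>)) = coeff (smult a (P \<alpha>)) (degree (P \<alpha>))"
              by simp
            then have "\<alpha> * lead_coeff (P \<alpha>) = a * lead_coeff (P \<alpha>)"
              by (simp add: coeff_shift_top)
            then show False using nz ne by simp
          qed
        qed
        have "poly (P a) (of_nat n) = 0" for n
        proof -
          have "poly (P a) (of_nat n) * a ^ n = 0" using S[rule_format, of n] PA insert.hyps by simp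
          then show ?thesis using a0 by simp
        qed
        then have "P a = 0" by (rule poly_zero_nat)
        then show ?thesis using False by simp
      qed
    qed
  qed
  show ?case using main by blast
qed




lemma Tconv_Suc: "Tconv \<alpha> a (Suc n) = \<alpha> * Tconv \<alpha> a n + a (Suc n)"
proof -
  have "Tconv \<alpha> a (Suc n) = (\<Sum>k\<le>n. \<alpha> ^ (Suc n - k) * a k) + a (Suc n)"
    unfolding Tconv_def by simp
  also have "(\<Sum>k\<le>n. \<alpha> ^ (Suc n - k) * a k) = \<alpha> * Tconv \<alpha> a n"
    unfolding Tconv_def sum_distrib_left
    by (rule sum.cong[OF refl]) (simp add: Suc_diff_le)
  finally show ?thesis .
qed

lemma rat_qp:
  fixes m :: nat
  shows "\<forall>(A::complex poly) B F. degree B = m \<longrightarrow> coeff B 0 \<noteq> 0 \<longrightarrow> degree A < degree B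
     \<longrightarrow> F * fps_of_poly B = fps_of_poly A \<longrightarrow> qp (\<lambda>n. F $ n)"
proof (induction m)
  case 0 then show ?case by simp
next
  case (Suc m)
  show ?case
  proof (intro allI impI)
    fix A B :: "complex poly" and F :: "complex fps"
    assume dB: "degree B = Suc m" and B0: "coeff B 0 \<noteq> 0" and dA: "degree A < degree B"
      and FB: "F * fps_of_poly B = fps_of_poly A"
    obtain z where z: "poly B z = 0" using alg_closed_imp_poly_has_root[of B] dB by auto
    have z0: "z \<noteq> 0" using z B0 by (auto simp: poly_0_coeff_0)
    obtain B1 where B1: "B = [:-z,1:] * B1" using z by (metis poly_eq_0_iff_dvd dvdE)
    define \<alpha> where "\<alpha> = inverse z"
    have a0: "\<alpha> \<noteq> 0" using z0 by (simp add: \<alpha>_def)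
    define B' where "B' = smult (-z) B1"
    have lin: "smult (-z) [:1, -\<alpha>:] = [:-z, 1:]" using z0 by (simp add: \<alpha>_def)
    have hB: "B = [:1, -\<alpha>:] * B'"
      by (simp only: B1 B'_def lin[symmetric] mult_smult_left mult_smult_right)
    have B1nz: "B1 \<noteq> 0" using B1 dB by auto
    have "degree B = Suc (degree B1)" unfolding B1 using B1nz by (subst degree_mult_eq) auto
    then have dB': "degree B' = m" using dB z0 by (simp add: B'_def)
    have B'nz: "B' \<noteq> 0" using B1nz z0 by (simp add: B'_def)
    have B'0: "coeff B' 0 \<noteq> 0"
      using B0 unfolding hB by (simp add: poly_0_coeff_0[symmetric])
    define G where "G = F * fps_of_poly [:1, -\<alpha>:]"
    have GB: "G * fps_of_poly B' = fps_of_poly A"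
      unfolding G_def using FB unfolding hB fps_of_poly_mult by (simp only: mult.assoc)
    define q where "q = coeff A m / lead_coeff B'"
    define r where "r = A - smult q B'"
    have "degree r \<le> m" unfolding r_def using dA dB dB'
      by (intro degree_diff_le) (simp_all add: degree_smult_le)
    moreover have "coeff r m = 0"
    proof -
      have "coeff B' m \<noteq> 0" using B'nz dB' leading_coeff_0_iff by blast
      then show ?thesis unfolding r_def q_def using dB' by simp
    qed
    ultimately have r: "r = 0 \<or> degree r < m" by (rule poly_deg_drop)
    define H where "H = G - fps_const q"
    have HB: "H * fps_of_poly B' = fps_of_poly r"
      unfolding H_def r_def using GB by (simp add: algebra_simps fps_of_poly_diff fps_of_poly_smult)
    have qH: "qp (\<lambda>n. H $ n)"
    proof (cases "r = 0")
      case True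
      then have "H * fps_of_poly B' = 0" using HB by simp
      moreover have "fps_of_poly B' \<noteq> 0" using B'nz by (simp add: fps_of_poly_eq_iff[of _ 0, simplified])
      ultimately have "H = 0" by simp
      then show ?thesis by (simp add: qp_zero)
    next
      case False
      then have "degree r < degree B'" using r dB' by simp
      then show ?thesis using Suc.IH HB dB' B'0 by blast
    qed
    have Gn: "G $ n = F $ n - (if n = 0 then 0 else \<alpha> * F $ (n - 1))" for n
    proof -
      have "G = F + fps_const (-\<alpha>) * (fps_X * F)"
        unfolding G_def fps_of_poly_linear' by (simp add: algebra_simps)
      then show ?thesis by simp
    qed
    have FT: "F $ n = Tconv \<alpha> (\<lambda>k. G $ k) n" for n
    proof (induction n)
      case 0 then show ?case by (simp add: Tconv_def Gn)
    next
      case (Suc n) then show ?case by (simp add: Tconv_Suc Gn)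
    qed
    have TG: "Tconv \<alpha> (\<lambda>k. G $ k) n = poly [:q:] (of_nat n) * \<alpha> ^ n + Tconv \<alpha> (\<lambda>k. H $ k) n" for n
    proof -
      have "Tconv \<alpha> (\<lambda>k. G $ k) n = (\<Sum>k\<le>n. (if k = 0 then \<alpha> ^ (n - k) * q else 0)) + Tconv \<alpha> (\<lambda>k. H $ k) n"
        unfolding Tconv_def sum.distrib[symmetric] H_def
        by (rule sum.cong[OF refl]) (simp add: algebra_simps)
      also have "(\<Sum>k\<le>n. (if k = 0 then \<alpha> ^ (n - k) * q else 0)) = \<alpha> ^ n * q"
        by (subst sum.delta) auto
      finally show ?thesis by (simp add: mult.commute)
    qed
    have "qp (\<lambda>n. poly [:q:] (of_nat n) * \<alpha> ^ n + Tconv \<alpha> (\<lambda>k. H $ k) n)"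
      by (intro qp_add qp_single a0 T_qp qH)
    moreover have "(\<lambda>n. F $ n) = (\<lambda>n. poly [:q:] (of_nat n) * \<alpha> ^ n + Tconv \<alpha> (\<lambda>k. H $ k) n)"
      using FT TG by auto
    ultimately show "qp (\<lambda>n. F $ n)" by simp
  qed
qed




lemma eig_sub:
  assumes p: "p > 1" and fR: "f \<in> ratfun_space" and fnz: "f \<noteq> 0"
    and eig: "hecke_U p f = fps_const c * f" and c0: "c \<noteq> 0"
  shows "\<exists>k::nat. c = real p ^ k \<or> c = - (real p ^ k)"
proof -
  obtain A B where AB: "poly B 0 \<noteq> 0" "degree A < degree B" "f * fps_of_poly B = fps_of_poly A"
    using fR by (rule ratfun_spaceE)
  define Ac where "Ac = map_poly complex_of_real A"
  define Bc where "Bc = map_poly complex_of_real B"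
  define Fc where "Fc = Abs_fps (\<lambda>n. complex_of_real (f $ n))"
  have cAc: "coeff Ac n = of_real (coeff A n)" for n unfolding Ac_def by (simp add: coeff_map_poly)
  have cBc: "coeff Bc n = of_real (coeff B n)" for n unfolding Bc_def by (simp add: coeff_map_poly)
  have dAc: "degree Ac = degree A" unfolding Ac_def by (rule degree_map_poly) simp
  have dBc: "degree Bc = degree B" unfolding Bc_def by (rule degree_map_poly) simp
  have FcB: "Fc * fps_of_poly Bc = fps_of_poly Ac"
  proof (rule fps_ext)
    fix n
    have "(f * fps_of_poly B) $ n = coeff A n" using AB(3) by simp
    then have "(\<Sum>i=0..n. f$i * coeff B (n-i)) = coeff A n" by (simp add: fps_mult_nth)
    then have "complex_of_real (\<Sum>i=0..n. f$i * coeff B (n-i)) = of_real (coeff A n)" by simp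
    then show "(Fc * fps_of_poly Bc) $ n = fps_of_poly Ac $ n"
      by (simp add: fps_mult_nth Fc_def cAc cBc)
  qed
  have Bc0: "coeff Bc 0 \<noteq> 0" using AB(1) by (simp add: cBc poly_0_coeff_0)
  have "qp (\<lambda>n. Fc $ n)"
    by (rule rat_qp[of "degree Bc", rule_format]) (use Bc0 dAc dBc AB(2) FcB in auto)
  then obtain S P where S: "finite S" "0 \<notin> S"
    and rep: "\<And>n. Fc $ n = (\<Sum>\<alpha>\<in>S. poly (P \<alpha>) (of_nat n) * \<alpha> ^ n)"
    unfolding qp_def by blast
  define cc where "cc = complex_of_real c"
  have cc0: "cc \<noteq> 0" using c0 by (simp add: cc_def)
  have fe: "f $ (p * n) = c * f $ n" for n
    using arg_cong[OF eig, of "\<lambda>g. g $ n"] by (simp add: hecke_nth)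
  have Fe: "Fc $ (p * n) = cc * Fc $ n" for n using fe[of n] by (simp add: Fc_def cc_def)
  define \<phi> where "\<phi> \<alpha> = \<alpha> ^ p" for \<alpha> :: complex
  define S2 where "S2 = S \<union> \<phi> ` S"
  have S2: "finite S2" "0 \<notin> S2" using S p by (auto simp: S2_def \<phi>_def)
  define E where "E \<beta> = (\<Sum>\<alpha>\<in>{\<alpha>\<in>S. \<phi> \<alpha> = \<beta>}. pcompose (P \<alpha>) [:0, of_nat p:])
      - (if \<beta> \<in> S then smult cc (P \<beta>) else 0)" for \<beta>
  have Esum: "(\<Sum>\<beta>\<in>S2. poly (E \<beta>) (of_nat n) * \<beta> ^ n) = 0" for n
  proof -
    have s1: "(\<Sum>\<beta>\<in>S2. poly (\<Sum>\<alpha>\<in>{\<alpha>\<in>S. \<phi> \<alpha> = \<beta>}. pcompose (P \<alpha>) [:0, of_nat p:]) (of_nat n) * \<beta> ^ n)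
        = Fc $ (p*n)"
    proof -
      have "(\<Sum>\<beta>\<in>S2. poly (\<Sum>\<alpha>\<in>{\<alpha>\<in>S. \<phi> \<alpha> = \<beta>}. pcompose (P \<alpha>) [:0, of_nat p:]) (of_nat n) * \<beta> ^ n)
          = (\<Sum>\<beta>\<in>S2. \<Sum>\<alpha>\<in>{\<alpha>\<in>S. \<phi> \<alpha> = \<beta>}. poly (P \<alpha>) (of_nat (p*n)) * \<alpha> ^ (p*n))"
      proof (rule sum.cong[OF refl])
        fix \<beta> assume "\<beta> \<in> S2"
        show "poly (\<Sum>\<alpha>\<in>{\<alpha>\<in>S. \<phi> \<alpha> = \<beta>}. pcompose (P \<alpha>) [:0, of_nat p:]) (of_nat n) * \<beta> ^ n
            = (\<Sum>\<alpha>\<in>{\<alpha>\<in>S. \<phi> \<alpha> = \<beta>}. poly (P \<alpha>) (of_nat (p*n)) * \<alpha> ^ (p*n))"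
          unfolding poly_sum sum_distrib_right
          by (rule sum.cong[OF refl]) (auto simp: poly_pcompose \<phi>_def power_mult[symmetric] mult.commute)
      qed
      also have "\<dots> = (\<Sum>\<alpha>\<in>S. poly (P \<alpha>) (of_nat (p*n)) * \<alpha> ^ (p*n))"
        by (rule sum.group) (use S in \<open>auto simp: S2_def\<close>)
      also have "\<dots> = Fc $ (p*n)" using rep by simp
      finally show ?thesis .
    qed
    have s2: "(\<Sum>\<beta>\<in>S2. poly (if \<beta> \<in> S then smult cc (P \<beta>) else 0) (of_nat n) * \<beta> ^ n) = cc * Fc $ n"
    proof -
      have "(\<Sum>\<beta>\<in>S2. poly (if \<beta> \<in> S then smult cc (P \<beta>) else 0) (of_nat n) * \<beta> ^ n)
          = (\<Sum>\<beta>\<in>S. cc * (poly (P \<beta>) (of_nat n) * \<beta> ^ n))"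
        by (rule sum.mono_neutral_cong_right) (use S2 S in \<open>auto simp: S2_def\<close>)
      then show ?thesis by (simp add: rep sum_distrib_left)
    qed
    show ?thesis
      unfolding E_def poly_diff left_diff_distrib sum_subtractf s1 s2 using Fe by simp
  qed
  have E0: "\<forall>\<beta>\<in>S2. E \<beta> = 0"
    using qp_unique[OF S2] Esum by blast
  obtain \<alpha>0 where a0S: "\<alpha>0 \<in> S" and Pa0: "P \<alpha>0 \<noteq> 0"
  proof (rule ccontr)
    assume "\<not> thesis"
    then have "\<forall>\<alpha>\<in>S. P \<alpha> = 0" using that by blast
    then have "Fc $ n = 0" for n using rep by simp
    then have "f $ n = 0" for n by (simp add: Fc_def)
    then have "f = 0" by (simp add: fps_ext)
    then show False using fnz by simp
  qed
  define j where "j = degree (P \<alpha>0)"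
  define e where "e \<alpha> = coeff (P \<alpha>) j" for \<alpha>
  define Z where "Z = {\<alpha>\<in>S. e \<alpha> \<noteq> 0}"
  have a0Z: "\<alpha>0 \<in> Z" using a0S Pa0 by (simp add: Z_def e_def j_def)
  have Zfin: "finite Z" using S by (simp add: Z_def)
  define pj where "pj = (of_nat p :: complex) ^ j"
  have pj0: "pj \<noteq> 0" using p by (simp add: pj_def)
  have K: "cc * e \<beta> = pj * (\<Sum>\<alpha>\<in>{\<alpha>\<in>Z. \<phi> \<alpha> = \<beta>}. e \<alpha>)" if "\<beta> \<in> Z" for \<beta>
  proof -
    have "\<beta> \<in> S2" "\<beta> \<in> S" using that by (auto simp: Z_def S2_def)
    then have "coeff (E \<beta>) j = 0" using E0 by simp
    then have "(\<Sum>\<alpha>\<in>{\<alpha>\<in>S. \<phi> \<alpha> = \<beta>}. pj * e \<alpha>) - cc * e \<beta> = 0"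
      using \<open>\<beta> \<in> S\<close> by (simp add: E_def coeff_sum coeff_pcompose_scale e_def pj_def)
    moreover have "(\<Sum>\<alpha>\<in>{\<alpha>\<in>S. \<phi> \<alpha> = \<beta>}. pj * e \<alpha>) = (\<Sum>\<alpha>\<in>{\<alpha>\<in>Z. \<phi> \<alpha> = \<beta>}. pj * e \<alpha>)"
      by (rule sum.mono_neutral_right) (use S in \<open>auto simp: Z_def\<close>)
    ultimately show ?thesis by (simp add: sum_distrib_left)
  qed
  have pre: "\<exists>\<alpha>\<in>Z. \<phi> \<alpha> = \<beta>" if "\<beta> \<in> Z" for \<beta>
  proof (rule ccontr)
    assume "\<not> (\<exists>\<alpha>\<in>Z. \<phi> \<alpha> = \<beta>)"
    then have em: "{\<alpha>\<in>Z. \<phi> \<alpha> = \<beta>} = {}" by auto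
    have "cc * e \<beta> = 0" using K[OF that] unfolding em by simp
    then show False using that cc0 by (simp add: Z_def)
  qed
  define Zt where "Zt = {\<alpha>\<in>Z. \<phi> \<alpha> \<in> Z}"
  have "Z \<subseteq> \<phi> ` Zt" using pre by (force simp: Zt_def)
  then have "card Z \<le> card (\<phi> ` Zt)" using Zfin by (intro card_mono) (auto simp: Zt_def)
  also have "\<dots> \<le> card Zt" using Zfin by (intro card_image_le) (simp add: Zt_def)
  finally have "card Z \<le> card Zt" .
  moreover have "Zt \<subseteq> Z" by (auto simp: Zt_def)
  ultimately have "Zt = Z" using Zfin by (meson card_mono card_subset_eq le_antisym)
  then have mapsto: "\<phi> \<alpha> \<in> Z" if "\<alpha> \<in> Z" for \<alpha> using that by (auto simp: Zt_def)
  have "\<phi> ` Z = Z" using mapsto \<open>Z \<subseteq> \<phi> ` Zt\<close> \<open>Zt = Z\<close> by auto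
  then have inj: "inj_on \<phi> Z" using Zfin by (intro eq_card_imp_inj_on) auto
  have step: "cc * e (\<phi> \<alpha>) = pj * e \<alpha>" if "\<alpha> \<in> Z" for \<alpha>
  proof -
    have "{\<gamma>\<in>Z. \<phi> \<gamma> = \<phi> \<alpha>} = {\<alpha>}" using inj that by (auto dest: inj_onD)
    then show ?thesis using K[OF mapsto[OF that]] by simp
  qed
  define it where "it t = (\<phi> ^^ t) \<alpha>0" for t
  have itZ: "it t \<in> Z \<and> cc ^ t * e (it t) = pj ^ t * e \<alpha>0" for t
  proof (induction t)
    case 0 then show ?case using a0Z by (simp add: it_def)
  next
    case (Suc t)
    have itS: "it (Suc t) = \<phi> (it t)" by (simp add: it_def)
    have "cc ^ Suc t * e (it (Suc t)) = cc ^ t * (cc * e (\<phi> (it t)))" by (simp add: itS)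
    also have "\<dots> = pj * (cc ^ t * e (it t))" using step Suc by simp
    also have "\<dots> = pj ^ Suc t * e \<alpha>0" using Suc by simp
    finally show ?case using mapsto Suc itS by simp
  qed
  have "\<not> inj it"
  proof
    assume "inj it"
    moreover have "range it \<subseteq> Z" using itZ by auto
    ultimately have "finite (UNIV :: nat set)" using Zfin
      by (meson finite_imageD finite_subset)
    then show False by simp
  qed
  then obtain a b where ab: "a \<noteq> b" "it a = it b" unfolding inj_def by blast
  obtain s t where st: "s < t" "it s = it t"
  proof (cases "a < b")
    case True then show ?thesis using that ab by blast
  next
    case False then have "b < a" using ab(1) by simp
    then show ?thesis using that[of b a] ab by simp
  qed
  define L where "L = t - s"
  have L0: "L > 0" and tL: "t = s + L" using st by (auto simp: L_def)
  have es: "e (it s) \<noteq> 0" using itZ[of s] by (simp add: Z_def)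
  have e0: "e \<alpha>0 \<noteq> 0" using a0Z by (simp add: Z_def)
  have X0: "pj ^ s * e \<alpha>0 \<noteq> 0" using pj0 e0 by simp
  have ct: "cc ^ t = cc ^ L * cc ^ s" by (simp add: tL power_add mult.commute)
  have pt: "pj ^ t = pj ^ L * pj ^ s" by (simp add: tL power_add mult.commute)
  have "cc ^ L * (pj ^ s * e \<alpha>0) = cc ^ L * (cc ^ s * e (it s))" using itZ[of s] by simp
  also have "\<dots> = cc ^ t * e (it t)" unfolding ct st(2) by (simp only: mult.assoc)
  also have "\<dots> = pj ^ t * e \<alpha>0" using itZ[of t] by simp
  also have "\<dots> = pj ^ L * (pj ^ s * e \<alpha>0)" unfolding pt by (simp only: mult.assoc)
  finally have "cc ^ L * (pj ^ s * e \<alpha>0) = pj ^ L * (pj ^ s * e \<alpha>0)" .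
  then have "cc ^ L = pj ^ L" using X0 by (simp only: mult_cancel_right) simp
  then have "complex_of_real (c ^ L) = complex_of_real ((real p ^ j) ^ L)"
    by (simp add: cc_def pj_def)
  then have cL: "c ^ L = (real p ^ j) ^ L" using of_real_eq_iff by blast
  have "\<bar>c\<bar> ^ L = \<bar>c ^ L\<bar>" by (simp add: power_abs)
  also have "\<dots> = (real p ^ j) ^ L" unfolding cL by simp
  finally have "\<bar>c\<bar> ^ L = (real p ^ j) ^ L" .
  then have "\<bar>c\<bar> = real p ^ j" by (rule power_eq_imp_eq_base[OF _ abs_ge_zero _ L0]) simp
  then have "c = real p ^ j \<or> c = - (real p ^ j)" by arith
  then show ?thesis by blast
qed



theorem mainTheorem1:
  fixes p :: nat
  assumes "p > 1"
  shows "point_spectrum_U p = {c. \<exists>k::nat. c = real p ^ k \<or> c = - (real p ^ k)} \<union> {0}"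
proof
  show "{c. \<exists>k::nat. c = real p ^ k \<or> c = - (real p ^ k)} \<union> {0} \<subseteq> point_spectrum_U p"
    using spec_supset[OF assms] .
  show "point_spectrum_U p \<subseteq> {c. \<exists>k::nat. c = real p ^ k \<or> c = - (real p ^ k)} \<union> {0}"
  proof
    fix c assume "c \<in> point_spectrum_U p"
    then obtain f where "f \<in> ratfun_space" "f \<noteq> 0" "hecke_U p f = fps_const c * f"
      unfolding point_spectrum_U_def by blast
    then show "c \<in> {c. \<exists>k::nat. c = real p ^ k \<or> c = - (real p ^ k)} \<union> {0}"
      using eig_sub[OF assms] by (cases "c = 0") auto
  qed
qed

end
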